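(* Let $M_1,\dots,M_n$ be real skew-symmetric $m\times m$ matrices with $2\leq n\leq m$, and let $v_1,\dots,v_{m-n}$ be nonpositive real numbers such that $M_1^2-\sum_{l=2}^n M_l^2=\mathrm{Diag}\left(-\tfrac12\mathrm{tr}(M_1^2),\tfrac12\mathrm{tr}(M_2^2),\dots,\tfrac12\mathrm{tr}(M_n^2),v_1,\dots,v_{m-n}\right).$ Then $(v_1,\dots,v_{m-n})=(0,\dots,0)$, $\lambda_1\left(\sum_{l=2}^n M_l^2\right)=\sum_{l=2}^n\lambda_1(M_l^2)$, and $\mathrm{rank}(M_i)\leq2$ for every $i\in\{2,\dots,n\}$.
   Context: For a real symmetric (or complex Hermitian) $m\times m$ matrix $A$, its real eigenvalues counted with multiplicity are ordered $\lambda_1(A)\leq\lambda_2(A)\leq\dots\leq\lambda_m(A)$. *)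

theory Defs
  imports "Jordan_Normal_Form.Char_Poly" "Jordan_Normal_Form.DL_Rank"
begin

definition mtrace :: "real mat \<Rightarrow> real" where
  "mtrace A = (\<Sum>i<dim_row A. A $$ (i, i))"

definition diag_of :: "nat \<Rightarrow> (nat \<Rightarrow> real) \<Rightarrow> real mat" where
  "diag_of m d = mat m m (\<lambda>(i, j). if i = j then d i else 0)"

definition msum :: "nat \<Rightarrow> nat set \<Rightarrow> (nat \<Rightarrow> real mat) \<Rightarrow> real mat" where
  "msum m I f = mat m m (\<lambda>ij. \<Sum>l\<in>I. f l $$ ij)"

definition lambda1 :: "real mat \<Rightarrow> real" where
  "lambda1 A = Min {x. eigenvalue A x}"

end

theory Submission
  imports Defs
begin

lemma cs_sum:
  fixes a b :: "nat \<Rightarrow> real"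
  assumes "finite S"
  shows "(\<Sum>i\<in>S. a i * b i)^2 \<le> (\<Sum>i\<in>S. (a i)^2) * (\<Sum>i\<in>S. (b i)^2)"
proof -
  let ?A = "\<Sum>i\<in>S. (a i)^2" and ?B = "\<Sum>i\<in>S. (b i)^2" and ?C = "\<Sum>i\<in>S. a i * b i"
  have pw: "(a i * b j - a j * b i)^2 = (a i)^2 * (b j)^2 + (b i)^2 * (a j)^2 - 2 * ((a i * b i) * (a j * b j))" for i j
    by (simp add: power2_eq_square algebra_simps)
  have "0 \<le> (\<Sum>i\<in>S. \<Sum>j\<in>S. (a i * b j - a j * b i)^2)"
    by (intro sum_nonneg) auto
  also have "\<dots> = (\<Sum>i\<in>S. \<Sum>j\<in>S. (a i)^2 * (b j)^2) + (\<Sum>i\<in>S. \<Sum>j\<in>S. (b i)^2 * (a j)^2)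
       - 2 * (\<Sum>i\<in>S. \<Sum>j\<in>S. (a i * b i) * (a j * b j))"
    unfolding pw by (simp only: sum.distrib sum_subtractf sum_distrib_left)
  also have "(\<Sum>i\<in>S. \<Sum>j\<in>S. (a i)^2 * (b j)^2) = ?A * ?B" by (simp only: sum_product)
  also have "(\<Sum>i\<in>S. \<Sum>j\<in>S. (b i)^2 * (a j)^2) = ?B * ?A" by (simp only: sum_product)
  also have "(\<Sum>i\<in>S. \<Sum>j\<in>S. (a i * b i) * (a j * b j)) = ?C * ?C" by (simp only: sum_product)
  finally show ?thesis by (simp add: power2_eq_square)
qed

lemma sq_entry:
  fixes A :: "real mat"
  assumes "A \<in> carrier_mat m m" "i < m" "j < m"
  shows "(A * A) $$ (i,j) = (\<Sum>k<m. A $$ (i,k) * A $$ (k,j))"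
  using assms by (simp add: scalar_prod_def lessThan_atLeast0)

lemma quad_form:
  fixes A :: "real mat"
  assumes "A \<in> carrier_mat m m" "x \<in> carrier_vec m"
  shows "x \<bullet> (A *\<^sub>v x) = (\<Sum>i<m. \<Sum>j<m. x $ i * A $$ (i,j) * x $ j)"
  using assms by (simp add: scalar_prod_def lessThan_atLeast0 sum_distrib_left mult.assoc)

lemma self_pos:
  fixes v :: "real vec"
  assumes "v \<in> carrier_vec m" "v \<noteq> 0\<^sub>v m"
  shows "0 < v \<bullet> v"
proof -
  obtain i where i: "i < m" "v $ i \<noteq> 0" using assms by (metis eq_vecI carrier_vecD index_zero_vec)
  have "v \<bullet> v = (\<Sum>k<m. (v $ k)^2)" using assms by (simp add: scalar_prod_def lessThan_atLeast0 power2_eq_square)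
  moreover have "0 < (\<Sum>k<m. (v $ k)^2)"
    by (rule sum_pos2[of _ i]) (use i in auto)
  ultimately show ?thesis by simp
qed

lemma lambda1_char:
  fixes P :: "real mat"
  assumes P: "P \<in> carrier_mat m m" and w: "w \<in> carrier_vec m" "w \<noteq> 0\<^sub>v m" "P *\<^sub>v w = c \<cdot>\<^sub>v w"
    and q: "\<And>x. x \<in> carrier_vec m \<Longrightarrow> c * (x \<bullet> x) \<le> x \<bullet> (P *\<^sub>v x)"
  shows "lambda1 P = c"
  unfolding lambda1_def
proof (rule Min_eqI)
  have "char_poly P \<noteq> 0" using degree_monic_char_poly[OF P] by auto
  hence "finite {x. poly (char_poly P) x = 0}" by (rule poly_roots_finite)
  thus "finite {x. eigenvalue P x}" using eigenvalue_root_char_poly[OF P] by simp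
  show "c \<in> {x. eigenvalue P x}" using w P unfolding eigenvalue_def eigenvector_def by auto
  fix y assume "y \<in> {x. eigenvalue P x}"
  then obtain v where v: "v \<in> carrier_vec m" "v \<noteq> 0\<^sub>v m" "P *\<^sub>v v = y \<cdot>\<^sub>v v"
    using P unfolding eigenvalue_def eigenvector_def by auto
  have pos: "0 < v \<bullet> v" by (rule self_pos[OF v(1,2)])
  have "c * (v \<bullet> v) \<le> v \<bullet> (y \<cdot>\<^sub>v v)" using q[OF v(1)] v(3) by simp
  also have "\<dots> = y * (v \<bullet> v)" using v(1) by simp
  finally show "c \<le> y" using pos by simp
qed

lemma sum_split0:
  fixes f :: "nat \<Rightarrow> 'a::comm_monoid_add"
  assumes "0 < m" shows "(\<Sum>k<m. f k) = f 0 + (\<Sum>k\<in>{1..<m}. f k)"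
  using assms by (simp add: lessThan_atLeast0 sum.atLeast_Suc_lessThan)

lemma lambda1_form:
  fixes u :: "nat \<Rightarrow> nat \<Rightarrow> real" and P :: "real mat"
  assumes K: "finite K" and m: "0 < m" and u0: "\<And>l. l \<in> K \<Longrightarrow> u l 0 = 0"
    and P: "P \<in> carrier_mat m m"
    and Pij: "\<And>i j. i < m \<Longrightarrow> j < m \<Longrightarrow> P $$ (i,j) = - (\<Sum>l\<in>K. u l i * u l j)
        - (if i = 0 \<and> j = 0 then (\<Sum>l\<in>K. \<Sum>k<m. (u l k)^2) else 0)"
  shows "lambda1 P = - (\<Sum>l\<in>K. \<Sum>k<m. (u l k)^2)"
proof -
  define W where "W = (\<Sum>l\<in>K. \<Sum>k<m. (u l k)^2)"
  have W0: "0 \<le> W" unfolding W_def by (intro sum_nonneg) auto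
  show ?thesis unfolding W_def[symmetric]
  proof (rule lambda1_char[OF P])
    show "unit_vec m 0 \<in> carrier_vec m" by simp
    show "unit_vec m 0 \<noteq> 0\<^sub>v m" using m by (metis index_unit_vec(1) index_zero_vec(1) zero_neq_one)
    show "P *\<^sub>v unit_vec m 0 = (- W) \<cdot>\<^sub>v unit_vec m 0"
    proof (rule eq_vecI)
      fix i assume i: "i < dim_vec ((- W) \<cdot>\<^sub>v unit_vec m 0)"
      hence i': "i < m" by simp
      have "(P *\<^sub>v unit_vec m 0) $ i = P $$ (i, 0)"
        using P i' m by (simp add: scalar_prod_right_unit)
      also have "\<dots> = ((- W) \<cdot>\<^sub>v unit_vec m 0) $ i"
        using Pij[OF i' m] u0 i' W_def by (simp add: unit_vec_def)
      finally show "(P *\<^sub>v unit_vec m 0) $ i = ((- W) \<cdot>\<^sub>v unit_vec m 0) $ i" .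
    qed (use P in simp)
    fix x :: "real vec" assume x: "x \<in> carrier_vec m"
    define X' where "X' = (\<Sum>i\<in>{1..<m}. (x $ i)^2)"
    have xx: "x \<bullet> x = (x $ 0)^2 + X'"
      using x m by (simp add: scalar_prod_def lessThan_atLeast0[symmetric] sum_split0 X'_def power2_eq_square)
    have qf: "x \<bullet> (P *\<^sub>v x) = - (\<Sum>l\<in>K. (\<Sum>i<m. u l i * x $ i)^2) - W * (x $ 0)^2"
    proof -
      have "x \<bullet> (P *\<^sub>v x) = (\<Sum>i<m. \<Sum>j<m. x $ i * P $$ (i,j) * x $ j)" by (rule quad_form[OF P x])
      also have "\<dots> = (\<Sum>i<m. \<Sum>j<m. - (\<Sum>l\<in>K. (u l i * x $ i) * (u l j * x $ j))
             - (if i = 0 \<and> j = 0 then W * (x $ 0)^2 else 0))"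
        by (intro sum.cong refl, simp add: Pij W_def sum_distrib_left sum_distrib_right algebra_simps power2_eq_square)
      also have "\<dots> = - (\<Sum>i<m. \<Sum>j<m. \<Sum>l\<in>K. (u l i * x $ i) * (u l j * x $ j))
             - (\<Sum>i<m. \<Sum>j<m. (if i = 0 \<and> j = 0 then W * (x $ 0)^2 else 0))"
        by (simp add: sum_subtractf sum_negf)
      also have "(\<Sum>i<m. \<Sum>j<m. (if i = 0 \<and> j = 0 then W * (x $ 0)^2 else 0)) = W * (x $ 0)^2"
      proof -
        have e: "\<And>i j. (if i = 0 \<and> j = 0 then W * (x $ 0)^2 else 0) = (if i = 0 then (if j = 0 then W * (x $ 0)^2 else 0) else 0)" by simp
        have e2: "(\<Sum>j<m. (if i = 0 then (if j = 0 then W * (x $ 0)^2 else 0) else 0)) = (if i = 0 then W * (x $ 0)^2 else 0)" for i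
          using m by simp
        show ?thesis unfolding e e2 using m by simp
      qed
      also have "(\<Sum>i<m. \<Sum>j<m. \<Sum>l\<in>K. (u l i * x $ i) * (u l j * x $ j))
          = (\<Sum>l\<in>K. (\<Sum>i<m. u l i * x $ i)^2)"
        by (simp add: power2_eq_square sum_product sum.swap[of _ K])
      finally show ?thesis .
    qed
    have cs: "(\<Sum>i<m. u l i * x $ i)^2 \<le> (\<Sum>k<m. (u l k)^2) * X'" if l: "l \<in> K" for l
    proof -
      have "(\<Sum>i<m. u l i * x $ i) = (\<Sum>i\<in>{1..<m}. u l i * x $ i)" using m u0[OF l] by (simp add: sum_split0)
      moreover have "(\<Sum>k<m. (u l k)^2) = (\<Sum>i\<in>{1..<m}. (u l i)^2)" using m u0[OF l] by (simp add: sum_split0)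
      ultimately show ?thesis unfolding X'_def using cs_sum[of "{1..<m}" "u l" "\<lambda>i. x $ i"] by simp
    qed
    have "(\<Sum>l\<in>K. (\<Sum>i<m. u l i * x $ i)^2) \<le> (\<Sum>l\<in>K. (\<Sum>k<m. (u l k)^2) * X')"
      by (rule sum_mono) (rule cs)
    also have "\<dots> = W * X'" unfolding W_def by (simp add: sum_distrib_right)
    finally have "(\<Sum>l\<in>K. (\<Sum>i<m. u l i * x $ i)^2) \<le> W * X'" .
    then show "- W * (x \<bullet> x) \<le> x \<bullet> (P *\<^sub>v x)" unfolding qf xx by (simp add: algebra_simps)
  qed
qed

lemma rank_le2:
  fixes A :: "real mat"
  assumes A: "A \<in> carrier_mat m m" and Z: "\<And>i k. i < m \<Longrightarrow> k < m \<Longrightarrow> i \<noteq> 0 \<Longrightarrow> k \<noteq> 0 \<Longrightarrow> A $$ (i,k) = 0"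
    and d: "m > 0 \<Longrightarrow> A $$ (0,0) = 0"
  shows "vec_space.rank m A \<le> 2"
proof -
  define B1 where "B1 = mat m m (\<lambda>(r,c). (if r = 0 then 1 else 0) * A $$ (0,c))"
  define B2 where "B2 = mat m m (\<lambda>(r,c). A $$ (r,0) * (if c = 0 then 1 else 0))"
  have B1: "B1 \<in> carrier_mat m m" and B2: "B2 \<in> carrier_mat m m" unfolding B1_def B2_def by auto
  have eq: "A = B1 + B2"
  proof (rule eq_matI)
    fix i j assume i: "i < dim_row (B1 + B2)" and j: "j < dim_col (B1 + B2)"
    hence i': "i < m" and j': "j < m" using B1 B2 by auto
    show "A $$ (i,j) = (B1 + B2) $$ (i,j)"
      using i' j' Z[OF i' j'] d unfolding B1_def B2_def by auto
  qed (use A B1 B2 in auto)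
  have r1: "vec_space.rank m B1 \<le> 1"
    by (rule vec_space.rank_le_1_product_entries[OF B1, of "\<lambda>r. if r = 0 then 1 else 0" "\<lambda>c. A $$ (0,c)"])
       (auto simp: B1_def)
  have r2: "vec_space.rank m B2 \<le> 1"
    by (rule vec_space.rank_le_1_product_entries[OF B2, of "\<lambda>r. A $$ (r,0)" "\<lambda>c. if c = 0 then 1 else 0"])
       (auto simp: B2_def)
  show ?thesis unfolding eq using vec_space.rank_subadditive[OF B1 B2] r1 r2 by simp
qed

theorem lemma4p1:
  fixes m n :: nat and M :: "nat \<Rightarrow> real mat" and v :: "nat \<Rightarrow> real"
  assumes "2 \<le> n" and "n \<le> m"
    and "\<And>l. l < n \<Longrightarrow> M l \<in> carrier_mat m m"
    and "\<And>l. l < n \<Longrightarrow> transpose_mat (M l) = - M l"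
    and "\<And>j. j < m - n \<Longrightarrow> v j \<le> 0"
    and "M 0 * M 0 - msum m {1..<n} (\<lambda>l. M l * M l) =
         diag_of m (\<lambda>i. if i = 0 then - mtrace (M 0 * M 0) / 2
                        else if i < n then mtrace (M i * M i) / 2
                        else v (i - n))"
  shows "(\<forall>j < m - n. v j = 0)
    \<and> lambda1 (msum m {1..<n} (\<lambda>l. M l * M l)) = (\<Sum>l\<in>{1..<n}. lambda1 (M l * M l))
    \<and> (\<forall>i\<in>{1..<n}. vec_space.rank m (M i) \<le> 2)"
proof -
  note Mc = assms(3)
  have m0: "0 < m" using assms(1,2) by simp
  have skew: "M l $$ (i,j) = - M l $$ (j,i)" if l: "l < n" and i: "i < m" and j: "j < m" for l i j
  proof -
    have "transpose_mat (M l) $$ (i,j) = (- M l) $$ (i,j)" using assms(4)[OF l] by simp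
    thus ?thesis using Mc[OF l] i j by simp
  qed
  have dg: "M l $$ (i,i) = 0" if l: "l < n" and i: "i < m" for l i
    using skew[OF l i i] by simp
  define q where "q l i = (\<Sum>k<m. (M l $$ (i,k))^2)" for l i
  define T where "T l = (\<Sum>i<m. q l i)" for l
  define R where "R l = (\<Sum>i\<in>{1..<m}. \<Sum>k\<in>{1..<m}. (M l $$ (i,k))^2)" for l
  define V where "V = (\<Sum>j<m - n. v j)"
  have sqd: "(M l * M l) $$ (i,i) = - q l i" if l: "l < n" and i: "i < m" for l i
  proof -
    have "(M l * M l) $$ (i,i) = (\<Sum>k<m. M l $$ (i,k) * M l $$ (k,i))" by (rule sq_entry[OF Mc[OF l] i i])
    also have "\<dots> = (\<Sum>k<m. - ((M l $$ (i,k))^2))"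
      by (rule sum.cong[OF refl]) (simp add: skew[OF l _ i] power2_eq_square)
    finally show ?thesis unfolding q_def by (simp add: sum_negf)
  qed
  have tr: "mtrace (M l * M l) = - T l" if l: "l < n" for l
    unfolding mtrace_def T_def using Mc[OF l] sqd[OF l] by (simp add: sum_negf)
  have TR: "T l = 2 * q l 0 + R l" if l: "l < n" for l
  proof -
    have a: "q l i = (M l $$ (i,0))^2 + (\<Sum>k\<in>{1..<m}. (M l $$ (i,k))^2)" for i
      unfolding q_def by (rule sum_split0[OF m0])
    have b: "(\<Sum>i\<in>{1..<m}. (M l $$ (i,0))^2) = q l 0"
    proof -
      have "(\<Sum>i\<in>{1..<m}. (M l $$ (i,0))^2) = (\<Sum>i\<in>{1..<m}. (M l $$ (0,i))^2)"
        by (rule sum.cong[OF refl]) (simp add: skew[OF l _ m0])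
      thus ?thesis unfolding q_def using sum_split0[OF m0, of "\<lambda>k. (M l $$ (0,k))^2"] dg[OF l m0] by simp
    qed
    have "T l = q l 0 + (\<Sum>i\<in>{1..<m}. q l i)" unfolding T_def by (rule sum_split0[OF m0])
    also have "(\<Sum>i\<in>{1..<m}. q l i) = (\<Sum>i\<in>{1..<m}. (M l $$ (i,0))^2) + R l"
      unfolding a R_def by (simp add: sum.distrib)
    finally show ?thesis using b by simp
  qed
  define d where "d i = (if i = 0 then - mtrace (M 0 * M 0) / 2
                        else if i < n then mtrace (M i * M i) / 2 else v (i - n))" for i
  have deq: "- q 0 i + (\<Sum>l\<in>{1..<n}. q l i) = d i" if i: "i < m" for i
  proof -
    have "(M 0 * M 0 - msum m {1..<n} (\<lambda>l. M l * M l)) $$ (i,i) = d i"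
      unfolding assms(6) diag_of_def d_def using i by simp
    moreover have "(M 0 * M 0 - msum m {1..<n} (\<lambda>l. M l * M l)) $$ (i,i)
        = (M 0 * M 0) $$ (i,i) - (\<Sum>l\<in>{1..<n}. (M l * M l) $$ (i,i))"
      using i Mc[of 0] assms(1) by (simp add: msum_def)
    moreover have "(\<Sum>l\<in>{1..<n}. (M l * M l) $$ (i,i)) = (\<Sum>l\<in>{1..<n}. - q l i)"
      by (rule sum.cong[OF refl]) (simp add: sqd i)
    ultimately show ?thesis using sqd[of 0 i] i assms(1) by (simp add: sum_negf)
  qed
  have d0: "d 0 = T 0 / 2" unfolding d_def using tr[of 0] assms(1) by simp
  have dsum: "(\<Sum>i<m. d i) = T 0 / 2 - (\<Sum>l\<in>{1..<n}. T l) / 2 + V"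
  proof -
    have "(\<Sum>i<m. d i) = d 0 + (\<Sum>i\<in>{1..<m}. d i)" by (rule sum_split0[OF m0])
    also have "(\<Sum>i\<in>{1..<m}. d i) = (\<Sum>i\<in>{1..<n}. d i) + (\<Sum>i\<in>{n..<m}. d i)"
      using assms(1,2) by (simp add: sum.atLeastLessThan_concat)
    also have "(\<Sum>i\<in>{1..<n}. d i) = (\<Sum>i\<in>{1..<n}. - T i / 2)"
      by (rule sum.cong[OF refl]) (simp add: d_def tr)
    also have "(\<Sum>i\<in>{n..<m}. d i) = (\<Sum>i\<in>{n..<m}. v (i - n))"
      by (rule sum.cong[OF refl]) (use assms(1) in \<open>simp add: d_def\<close>)
    also have "\<dots> = V"
    proof -
      have "(\<Sum>i\<in>{n..<m}. v (i - n)) = (\<Sum>i\<in>{0+n..<(m-n)+n}. v (i - n))" using assms(2) by simp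
      also have "\<dots> = (\<Sum>j\<in>{0..<m-n}. v j)" by (simp only: sum.shift_bounds_nat_ivl) simp
      finally show ?thesis unfolding V_def by (simp add: lessThan_atLeast0)
    qed
    finally show ?thesis using d0 by (simp add: sum_divide_distrib[symmetric] sum_negf)
  qed
  have totaleq: "- T 0 + (\<Sum>l\<in>{1..<n}. T l) = T 0 / 2 - (\<Sum>l\<in>{1..<n}. T l) / 2 + V"
  proof -
    have "(\<Sum>i<m. - q 0 i + (\<Sum>l\<in>{1..<n}. q l i)) = (\<Sum>i<m. d i)"
      by (rule sum.cong[OF refl]) (use deq in simp)
    moreover have "(\<Sum>i<m. - q 0 i + (\<Sum>l\<in>{1..<n}. q l i)) = - T 0 + (\<Sum>l\<in>{1..<n}. T l)"
      unfolding T_def by (simp add: sum.distrib sum_negf sum_subtractf, rule sum.swap)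
    ultimately show ?thesis using dsum by simp
  qed
  have eq0: "- q 0 0 + (\<Sum>l\<in>{1..<n}. q l 0) = T 0 / 2" using deq[OF m0] d0 by simp
  have sumT: "(\<Sum>l\<in>{1..<n}. T l) = 2 * (\<Sum>l\<in>{1..<n}. q l 0) + (\<Sum>l\<in>{1..<n}. R l)"
  proof -
    have "(\<Sum>l\<in>{1..<n}. T l) = (\<Sum>l\<in>{1..<n}. 2 * q l 0 + R l)"
      by (rule sum.cong[OF refl]) (simp add: TR)
    thus ?thesis by (simp add: sum.distrib sum_distrib_left)
  qed
  have q00: "0 \<le> q 0 0" unfolding q_def by (intro sum_nonneg) auto
  have Rnn: "0 \<le> R l" for l unfolding R_def by (intro sum_nonneg) auto
  have sR: "0 \<le> (\<Sum>l\<in>{1..<n}. R l)" by (intro sum_nonneg Rnn)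
  have Vnp: "V \<le> 0" unfolding V_def by (intro sum_nonpos) (simp add: assms(5))
  have V0: "V = 0" and sR0: "(\<Sum>l\<in>{1..<n}. R l) = 0"
    using totaleq eq0 sumT q00 sR Vnp by linarith+
  have part1: "\<forall>j < m - n. v j = 0"
  proof -
    have "(\<Sum>j<m - n. - v j) = 0" using V0 unfolding V_def by (simp add: sum_negf)
    hence "\<forall>j\<in>{..<m-n}. - v j = 0" by (subst sum_nonneg_eq_0_iff[symmetric]) (auto simp: assms(5))
    thus ?thesis by simp
  qed
  have Z: "M l $$ (i,k) = 0" if l: "l \<in> {1..<n}" and i: "i < m" and k: "k < m" and "i \<noteq> 0" "k \<noteq> 0" for l i k
  proof -
    have "\<forall>l\<in>{1..<n}. R l = 0" using sR0 by (subst sum_nonneg_eq_0_iff[symmetric]) (auto simp: Rnn)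
    hence "R l = 0" using l by simp
    hence "\<forall>i\<in>{1..<m}. (\<Sum>k\<in>{1..<m}. (M l $$ (i,k))^2) = 0" unfolding R_def
      by (subst sum_nonneg_eq_0_iff[symmetric]) (auto intro: sum_nonneg)
    hence "(\<Sum>k\<in>{1..<m}. (M l $$ (i,k))^2) = 0" using i \<open>i \<noteq> 0\<close> by simp
    hence "\<forall>k\<in>{1..<m}. (M l $$ (i,k))^2 = 0" by (subst sum_nonneg_eq_0_iff[symmetric]) auto
    thus ?thesis using k \<open>k \<noteq> 0\<close> by simp
  qed
  have part3: "\<forall>i\<in>{1..<n}. vec_space.rank m (M i) \<le> 2"
  proof
    fix l assume l: "l \<in> {1..<n}"
    hence l': "l < n" by simp
    show "vec_space.rank m (M l) \<le> 2"
      by (rule rank_le2[OF Mc[OF l']]) (use Z[OF l] dg[OF l'] in auto)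
  qed
  define u where "u l i = M l $$ (i,0)" for l i
  have u0: "u l 0 = 0" if "l \<in> {1..<n}" for l using dg[of l 0] that m0 unfolding u_def by simp
  have sqe: "(M l * M l) $$ (i,j) = - (u l i * u l j) - (if i = 0 \<and> j = 0 then (\<Sum>k<m. (u l k)^2) else 0)"
    if l: "l \<in> {1..<n}" and i: "i < m" and j: "j < m" for l i j
  proof -
    have l': "l < n" using l by simp
    have "(M l * M l) $$ (i,j) = (\<Sum>k<m. M l $$ (i,k) * M l $$ (k,j))" by (rule sq_entry[OF Mc[OF l'] i j])
    also have "\<dots> = M l $$ (i,0) * M l $$ (0,j) + (\<Sum>k\<in>{1..<m}. M l $$ (i,k) * M l $$ (k,j))"
      by (rule sum_split0[OF m0])
    finally have e: "(M l * M l) $$ (i,j) = M l $$ (i,0) * M l $$ (0,j) + (\<Sum>k\<in>{1..<m}. M l $$ (i,k) * M l $$ (k,j))" .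
    show ?thesis
    proof (cases "i = 0")
      case True
      show ?thesis
      proof (cases "j = 0")
        case True
        have "(\<Sum>k\<in>{1..<m}. M l $$ (i,k) * M l $$ (k,j)) = (\<Sum>k\<in>{1..<m}. - ((u l k)^2))"
          by (rule sum.cong[OF refl]) (simp add: \<open>i = 0\<close> True u_def skew[OF l' m0] power2_eq_square)
        moreover have "(\<Sum>k<m. (u l k)^2) = (u l 0)^2 + (\<Sum>k\<in>{1..<m}. (u l k)^2)" by (rule sum_split0[OF m0])
        ultimately show ?thesis using e \<open>i = 0\<close> True u0[OF l] dg[OF l' m0] by (simp add: sum_negf)
      next
        case False
        have "(\<Sum>k\<in>{1..<m}. M l $$ (i,k) * M l $$ (k,j)) = 0"
          by (rule sum.neutral) (use Z[OF l _ j _ False] in auto)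
        thus ?thesis using e \<open>i = 0\<close> False u0[OF l] dg[OF l' m0] by simp
      qed
    next
      case False
      have s0: "(\<Sum>k\<in>{1..<m}. M l $$ (i,k) * M l $$ (k,j)) = 0"
        by (rule sum.neutral) (use Z[OF l i _ False] in auto)
      show ?thesis
      proof (cases "j = 0")
        case True
        thus ?thesis using e s0 False u0[OF l] dg[OF l' m0] by simp
      next
        case False
        thus ?thesis using e s0 \<open>i \<noteq> 0\<close> skew[OF l' m0 j] by (simp add: u_def)
      qed
    qed
  qed
  define S where "S = msum m {1..<n} (\<lambda>l. M l * M l)"
  have lamS: "lambda1 S = - (\<Sum>l\<in>{1..<n}. \<Sum>k<m. (u l k)^2)"
  proof (rule lambda1_form[where K="{1..<n}" and u=u, OF _ m0])
    show "S \<in> carrier_mat m m" unfolding S_def msum_def by simp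
    fix i j assume i: "i < m" and j: "j < m"
    have "S $$ (i,j) = (\<Sum>l\<in>{1..<n}. - (u l i * u l j) - (if i = 0 \<and> j = 0 then (\<Sum>k<m. (u l k)^2) else 0))"
      unfolding S_def msum_def using i j by (simp add: sqe)
    also have "\<dots> = - (\<Sum>l\<in>{1..<n}. u l i * u l j) - (if i = 0 \<and> j = 0 then (\<Sum>l\<in>{1..<n}. \<Sum>k<m. (u l k)^2) else 0)"
      by (simp add: sum_subtractf sum_negf)
    finally show "S $$ (i,j) = - (\<Sum>l\<in>{1..<n}. u l i * u l j) - (if i = 0 \<and> j = 0 then (\<Sum>l\<in>{1..<n}. \<Sum>k<m. (u l k)^2) else 0)" .
  qed (use u0 in auto)
  have lamL: "lambda1 (M l * M l) = - (\<Sum>k<m. (u l k)^2)" if l: "l \<in> {1..<n}" for l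
  proof -
    have l': "l < n" using l by simp
    have "lambda1 (M l * M l) = - (\<Sum>l'\<in>{l}. \<Sum>k<m. (u l' k)^2)"
    proof (rule lambda1_form[OF _ m0])
      show "M l * M l \<in> carrier_mat m m" using Mc[OF l'] by simp
    qed (use u0[OF l] sqe[OF l] in auto)
    thus ?thesis by simp
  qed
  have part2: "lambda1 S = (\<Sum>l\<in>{1..<n}. lambda1 (M l * M l))"
    unfolding lamS by (simp add: lamL sum_negf)
  show ?thesis using part1 part2 part3 unfolding S_def by blast
qed

end
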